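(* Let $C=\{(c_1,\dots,c_e)\in\mathbb{R}^e: c_1\ge-(c_2+\dots+c_e),\ c_i\ge0\ \text{for } 2\le i\le e\}$ and let $f\in\mathbb{K}[[\underline{x}]][y]$ be monic of degree $n\ge1$. Then $f$ is irreducible in $\mathbb{K}_C[[\underline{x}]][y]$ if and only if $F(X_1,\dots,X_e,y)=f(X_1,X_2X_1,\dots,X_eX_1,y)$ is irreducible in $\mathbb{K}[[\underline{X}]][y]$.
   Context: $\mathbb{K}$ is an algebraically closed field of characteristic $0$, $\underline{x}=(x_1,\dots,x_e)$, $\underline{X}=(X_1,\dots,X_e)$. $C$ is a line free cone, and $\mathbb{K}_C[[\underline{x}]]$ denotes the ring of formal series $\sum_{p\in C\cap\mathbb{Z}^e}a_p\underline{x}^p$; it contains $\mathbb{K}[[\underline{x}]]$. Irreducibility of a monic polynomial of degree $n$ in $A[y]$ means it is not a product of two monic polynomials of $A[y]$ of $y$-degrees strictly between $0$ and $n$. *)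

theory Defs
  imports "HOL-Computational_Algebra.Polynomial"
begin

text \<open>Exponent vectors in Z^e are functions nat => int vanishing from index e on;
  coordinate i (0-based) corresponds to the paper's x_(i+1).\<close>

type_synonym 'k series = "(nat \<Rightarrow> int) \<Rightarrow> 'k"

definition nat_exps :: "nat \<Rightarrow> (nat \<Rightarrow> int) set" where
  "nat_exps e = {p. (\<forall>i. e \<le> i \<longrightarrow> p i = 0) \<and> (\<forall>i<e. 0 \<le> p i)}"

definition coneC_exps :: "nat \<Rightarrow> (nat \<Rightarrow> int) set" where
  "coneC_exps e = {p. (\<forall>i. e \<le> i \<longrightarrow> p i = 0)
      \<and> - (\<Sum>i\<in>{1..<e}. p i) \<le> p 0 \<and> (\<forall>i\<in>{1..<e}. 0 \<le> p i)}"

definition series_ring :: "(nat \<Rightarrow> int) set \<Rightarrow> 'k::zero series set" where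
  "series_ring S = {a. \<forall>p. p \<notin> S \<longrightarrow> a p = 0}"

text \<open>Cauchy product in K_S[[x]] (the index set is finite for the cones used here).\<close>
definition series_mult :: "(nat \<Rightarrow> int) set \<Rightarrow> 'k::comm_semiring_1 series \<Rightarrow> 'k series \<Rightarrow> 'k series" where
  "series_mult S a b r =
     (\<Sum>pq\<in>{(p, q). p \<in> S \<and> q \<in> S \<and> (\<lambda>i. p i + q i) = r}. a (fst pq) * b (snd pq))"

definition series_one :: "'k::{zero,one} series" where
  "series_one p = (if p = (\<lambda>_. 0) then 1 else 0)"

text \<open>Polynomials in y over K_S[[x]]: coefficient functions nat => series.
  Monic of degree n means coefficients in the ring, leading coefficient 1, zero above n.\<close>
definition monic_poly_over :: "'k::{zero,one} series set \<Rightarrow> nat \<Rightarrow> (nat \<Rightarrow> 'k series) \<Rightarrow> bool" where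
  "monic_poly_over A n f \<longleftrightarrow>
     (\<forall>k<n. f k \<in> A) \<and> f n = series_one \<and> (\<forall>k. n < k \<longrightarrow> f k = (\<lambda>_. 0))"

definition poly_mult_over :: "(nat \<Rightarrow> int) set \<Rightarrow> (nat \<Rightarrow> 'k::comm_semiring_1 series)
     \<Rightarrow> (nat \<Rightarrow> 'k series) \<Rightarrow> (nat \<Rightarrow> 'k series)" where
  "poly_mult_over S g h k = (\<lambda>r. \<Sum>i\<le>k. series_mult S (g i) (h (k - i)) r)"

definition irreducible_over :: "(nat \<Rightarrow> int) set \<Rightarrow> nat \<Rightarrow> (nat \<Rightarrow> 'k::comm_semiring_1 series) \<Rightarrow> bool" where
  "irreducible_over S n f \<longleftrightarrow>
     \<not> (\<exists>d g h. 0 < d \<and> d < n \<and> monic_poly_over (series_ring S) d g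
          \<and> monic_poly_over (series_ring S) (n - d) h \<and> f = poly_mult_over S g h)"

text \<open>Substitution x_1 = X_1, x_i = X_i X_1 (i \<ge> 2): the monomial x^p goes to X^q with
  q_1 = p_1 + ... + p_e and q_i = p_i, so the coefficient of X^q is that of x^p with
  p = (q_1 - (q_2+...+q_e), q_2, ..., q_e) when p \<in> N^e, and 0 otherwise.\<close>
definition blowup_exp :: "nat \<Rightarrow> (nat \<Rightarrow> int) \<Rightarrow> (nat \<Rightarrow> int)" where
  "blowup_exp e q = q(0 := q 0 - (\<Sum>i\<in>{1..<e}. q i))"

definition blowup_series :: "nat \<Rightarrow> 'k::zero series \<Rightarrow> 'k series" where
  "blowup_series e a q = (if blowup_exp e q \<in> nat_exps e then a (blowup_exp e q) else 0)"

end

theory Submission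
  imports Defs
begin

definition unblow :: "nat \<Rightarrow> (nat \<Rightarrow> int) \<Rightarrow> (nat \<Rightarrow> int)" where
  "unblow e p = p(0 := p 0 + (\<Sum>i\<in>{1..<e}. p i))"

lemma sum_upd0: "(\<Sum>i\<in>{1..<e::nat}. (p(0 := v)) i) = (\<Sum>i\<in>{1..<e}. p i)"
proof (rule sum.cong[OF refl])
  fix x assume "x \<in> {1..<e}"
  then have "x \<noteq> 0" by auto
  then show "(p(0 := v)) x = p x" by simp
qed

lemma blow_unblow: "blowup_exp e (unblow e p) = p"
  unfolding blowup_exp_def unblow_def by (auto simp: sum_upd0)

lemma unblow_blow: "unblow e (blowup_exp e p) = p"
  unfolding blowup_exp_def unblow_def by (auto simp: sum_upd0)

lemma blow_add: "blowup_exp e (\<lambda>i. p i + q i) = (\<lambda>i. blowup_exp e p i + blowup_exp e q i)"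
  unfolding blowup_exp_def by (auto simp: sum.distrib)

lemma blow_inj: "blowup_exp e p = blowup_exp e q \<longleftrightarrow> p = q"
  by (metis unblow_blow)

lemma blow_zero: "blowup_exp e p = (\<lambda>_. 0) \<longleftrightarrow> p = (\<lambda>_. 0)"
proof -
  have "blowup_exp e (\<lambda>_. 0) = (\<lambda>_. 0)" unfolding blowup_exp_def by auto
  then show ?thesis by (metis blow_inj)
qed

lemma unblow_zero: "unblow e p = (\<lambda>_. 0) \<longleftrightarrow> p = (\<lambda>_. 0)"
  by (metis blow_unblow blow_zero)

lemma blow_cone:
  assumes "1 \<le> e"
  shows "blowup_exp e p \<in> coneC_exps e \<longleftrightarrow> p \<in> nat_exps e"
proof -
  have s: "(\<Sum>i\<in>{1..<e}. blowup_exp e p i) = (\<Sum>i\<in>{1..<e}. p i)"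
    unfolding blowup_exp_def by (rule sum_upd0)
  have b0: "blowup_exp e p 0 = p 0 - (\<Sum>i\<in>{1..<e}. p i)" unfolding blowup_exp_def by simp
  have bi: "\<And>i. i \<noteq> 0 \<Longrightarrow> blowup_exp e p i = p i" unfolding blowup_exp_def by simp
  show ?thesis
    unfolding coneC_exps_def nat_exps_def mem_Collect_eq s b0
    using assms bi
    apply auto
    subgoal for i by (cases i) auto
    done
qed

lemma unblow_cone:
  assumes "1 \<le> e"
  shows "p \<in> coneC_exps e \<longleftrightarrow> unblow e p \<in> nat_exps e"
  using blow_cone[OF assms, of "unblow e p"] by (simp add: blow_unblow)

lemma mult_transport:
  assumes "1 \<le> e"
  shows "series_mult (coneC_exps e) a b (blowup_exp e r)
       = series_mult (nat_exps e) (a \<circ> blowup_exp e) (b \<circ> blowup_exp e) r"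
proof -
  let ?h = "\<lambda>pq. (blowup_exp e (fst pq), blowup_exp e (snd pq))"
  let ?Sn = "{(p, q). p \<in> nat_exps e \<and> q \<in> nat_exps e \<and> (\<lambda>i. p i + q i) = r}"
  let ?Sc = "{(p, q). p \<in> coneC_exps e \<and> q \<in> coneC_exps e \<and> (\<lambda>i. p i + q i) = blowup_exp e r}"
  have "bij_betw ?h ?Sn ?Sc"
  proof (rule bij_betw_byWitness[where f' = "\<lambda>pq. (unblow e (fst pq), unblow e (snd pq))"])
    show "\<forall>a\<in>?Sn. (unblow e (fst (?h a)), unblow e (snd (?h a))) = a"
      by (auto simp: unblow_blow)
    show "\<forall>a\<in>?Sc. ?h (unblow e (fst a), unblow e (snd a)) = a"
      by (auto simp: blow_unblow)
    show "?h ` ?Sn \<subseteq> ?Sc"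
      using blow_cone[OF assms] by (auto simp: blow_add)
    show "(\<lambda>pq. (unblow e (fst pq), unblow e (snd pq))) ` ?Sc \<subseteq> ?Sn"
    proof
      fix x assume "x \<in> (\<lambda>pq. (unblow e (fst pq), unblow e (snd pq))) ` ?Sc"
      then obtain p q where pq: "p \<in> coneC_exps e" "q \<in> coneC_exps e"
        "(\<lambda>i. p i + q i) = blowup_exp e r" and x: "x = (unblow e p, unblow e q)" by auto
      have "blowup_exp e (\<lambda>i. unblow e p i + unblow e q i) = blowup_exp e r"
        using pq(3) by (simp add: blow_add blow_unblow)
      then have "(\<lambda>i. unblow e p i + unblow e q i) = r" by (simp add: blow_inj)
      then show "x \<in> ?Sn" using pq unblow_cone[OF assms] x by auto
    qed
  qed
  then have "(\<Sum>pq\<in>?Sn. (\<lambda>pq. a (fst pq) * b (snd pq)) (?h pq)) = (\<Sum>pq\<in>?Sc. a (fst pq) * b (snd pq))"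
    by (rule sum.reindex_bij_betw)
  then show ?thesis unfolding series_mult_def by (simp add: case_prod_beta)
qed

lemma pmult_transport:
  assumes "1 \<le> e"
  shows "poly_mult_over (coneC_exps e) g h k (blowup_exp e r)
       = poly_mult_over (nat_exps e) (\<lambda>k. g k \<circ> blowup_exp e) (\<lambda>k. h k \<circ> blowup_exp e) k r"
  unfolding poly_mult_over_def by (simp only: mult_transport[OF assms])

lemma one_blow: "series_one \<circ> blowup_exp e = series_one"
  unfolding series_one_def by (auto simp: blow_zero)

lemma one_unblow: "series_one \<circ> unblow e = series_one"
  unfolding series_one_def by (auto simp: unblow_zero)

lemma monic_blow:
  assumes "1 \<le> e" "monic_poly_over (series_ring (coneC_exps e)) d g"
  shows "monic_poly_over (series_ring (nat_exps e)) d (\<lambda>k. g k \<circ> blowup_exp e)"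
  using assms blow_cone[OF assms(1)] unfolding monic_poly_over_def series_ring_def
  by (auto simp: one_blow)

lemma monic_unblow:
  assumes "1 \<le> e" "monic_poly_over (series_ring (nat_exps e)) d g"
  shows "monic_poly_over (series_ring (coneC_exps e)) d (\<lambda>k. g k \<circ> unblow e)"
  using assms unblow_cone[OF assms(1)] unfolding monic_poly_over_def series_ring_def
  by (auto simp: one_unblow)

theorem mainTheorem17:
  fixes f :: "nat \<Rightarrow> 'k::field_char_0 series" and e n :: nat
  assumes alg_closed: "\<forall>p::'k poly. 0 < degree p \<longrightarrow> (\<exists>x. poly p x = 0)"
    and "1 \<le> e" and "1 \<le> n"
    and "monic_poly_over (series_ring (nat_exps e)) n f"
  shows "irreducible_over (coneC_exps e) n f
     \<longleftrightarrow> irreducible_over (nat_exps e) n (\<lambda>k. blowup_series e (f k))"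
proof -
  have fN: "\<And>k. f k \<in> series_ring (nat_exps e)"
  proof -
    fix k
    show "f k \<in> series_ring (nat_exps e)"
    proof (cases "k < n")
      case True then show ?thesis using assms(4) unfolding monic_poly_over_def by auto
    next
      case False
      then have "k = n \<or> n < k" by auto
      then show ?thesis using assms(4) unfolding monic_poly_over_def series_ring_def
          series_one_def nat_exps_def by auto
    qed
  qed
  have bf: "(\<lambda>k. blowup_series e (f k)) = (\<lambda>k. f k \<circ> blowup_exp e)"
    using fN unfolding blowup_series_def series_ring_def by (auto intro!: ext)
  show ?thesis
  proof
    assume irr: "irreducible_over (coneC_exps e) n f"
    show "irreducible_over (nat_exps e) n (\<lambda>k. blowup_series e (f k))"
      unfolding irreducible_over_def bf
    proof
      assume "\<exists>d g h. 0 < d \<and> d < n \<and> monic_poly_over (series_ring (nat_exps e)) d g \<and>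
          monic_poly_over (series_ring (nat_exps e)) (n - d) h \<and>
          (\<lambda>k. f k \<circ> blowup_exp e) = poly_mult_over (nat_exps e) g h"
      then obtain d g h where d: "0 < d" "d < n" and g: "monic_poly_over (series_ring (nat_exps e)) d g"
        and h: "monic_poly_over (series_ring (nat_exps e)) (n - d) h"
        and eq: "(\<lambda>k. f k \<circ> blowup_exp e) = poly_mult_over (nat_exps e) g h" by blast
      let ?g = "\<lambda>k. g k \<circ> unblow e" and ?h = "\<lambda>k. h k \<circ> unblow e"
      have gg: "(\<lambda>k. ?g k \<circ> blowup_exp e) = g" by (auto simp: unblow_blow intro!: ext)
      have hh: "(\<lambda>k. ?h k \<circ> blowup_exp e) = h" by (auto simp: unblow_blow intro!: ext)
      have "f = poly_mult_over (coneC_exps e) ?g ?h"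
      proof (intro ext)
        fix k p
        have "f k p = f k (blowup_exp e (unblow e p))" by (simp add: blow_unblow)
        also have "\<dots> = poly_mult_over (nat_exps e) g h k (unblow e p)"
          using fun_cong[OF fun_cong[OF eq, of k], of "unblow e p"] by simp
        also have "\<dots> = poly_mult_over (coneC_exps e) ?g ?h k (blowup_exp e (unblow e p))"
          using pmult_transport[OF assms(2), of ?g ?h k "unblow e p"] gg hh by simp
        also have "\<dots> = poly_mult_over (coneC_exps e) ?g ?h k p" by (simp add: blow_unblow)
        finally show "f k p = poly_mult_over (coneC_exps e) ?g ?h k p" .
      qed
      then show False using irr d monic_unblow[OF assms(2) g] monic_unblow[OF assms(2) h]
        unfolding irreducible_over_def by blast
    qed
  next
    assume irr: "irreducible_over (nat_exps e) n (\<lambda>k. blowup_series e (f k))"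
    show "irreducible_over (coneC_exps e) n f"
      unfolding irreducible_over_def
    proof
      assume "\<exists>d g h. 0 < d \<and> d < n \<and> monic_poly_over (series_ring (coneC_exps e)) d g \<and>
          monic_poly_over (series_ring (coneC_exps e)) (n - d) h \<and>
          f = poly_mult_over (coneC_exps e) g h"
      then obtain d g h where d: "0 < d" "d < n" and g: "monic_poly_over (series_ring (coneC_exps e)) d g"
        and h: "monic_poly_over (series_ring (coneC_exps e)) (n - d) h"
        and eq: "f = poly_mult_over (coneC_exps e) g h" by blast
      have "(\<lambda>k. f k \<circ> blowup_exp e) = poly_mult_over (nat_exps e) (\<lambda>k. g k \<circ> blowup_exp e) (\<lambda>k. h k \<circ> blowup_exp e)"
        using pmult_transport[OF assms(2), of g h] eq by (auto intro!: ext)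
      then show False using irr d monic_blow[OF assms(2) g] monic_blow[OF assms(2) h] bf
        unfolding irreducible_over_def by metis
    qed
  qed
qed

end
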